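(* Let $n\ge1$ and consider $n$ elements with states ${\bf x}_i(t)\in\mathbb{R}^m$ and dynamics $$\dot{\bf x}_i(t)=\sum_{j\in\mathcal{N}_i}{\bf K}_{ji}\big({\bf x}_j(t-T_{ji})-{\bf x}_i(t)\big),\qquad i=1,\dots,n,$$ where $\mathcal{N}_i\subseteq\{1,\dots,n\}\setminus\{i\}$ is a fixed set of neighbors of $i$, each ${\bf K}_{ji}$ is a constant symmetric positive definite $m\times m$ matrix, and each $T_{ji}\ge0$ is a constant delay (delays may differ from link to link and between the two directions of a link). Assume the network (directed graph with an edge $j\to i$ whenever $j\in\mathcal{N}_i$) is connected, and that the links are either bidirectional with ${\bf K}_{ji}={\bf K}_{ij}$, or unidirectional but formed into closed rings with identical gains within each ring (or a mixture of both types). Then, regardless of the values of the delays and of the (continuous) initial functions, every solution asymptotically reaches group agreement: ${\bf x}_i(t)-{\bf x}_j(t)\to0$ as $t\to\infty$ for all $i,j$. *)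

theory Defs
  imports "HOL-Analysis.Analysis"
begin

text \<open>Nodes are the naturals 0,...,n-1.  Node j is a neighbour of node i iff j \<in> N i,
  which gives a directed link (edge) from j to i, represented as the pair (j, i).\<close>

definition link :: "(nat \<Rightarrow> nat set) \<Rightarrow> nat \<Rightarrow> nat \<Rightarrow> nat \<Rightarrow> bool" where
  "link N n j i \<longleftrightarrow> i < n \<and> j \<in> N i"

definition network_connected :: "(nat \<Rightarrow> nat set) \<Rightarrow> nat \<Rightarrow> bool" where
  "network_connected N n \<longleftrightarrow>
     (\<forall>i<n. \<forall>j<n. (\<lambda>a b. link N n a b \<or> link N n b a)\<^sup>*\<^sup>* i j)"

definition sym_posdef :: "real^'m^'m \<Rightarrow> bool" where
  "sym_posdef A \<longleftrightarrow> transpose A = A \<and> (\<forall>v. v \<noteq> 0 \<longrightarrow> 0 < v \<bullet> (A *v v))"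

definition ring_edges :: "nat list \<Rightarrow> (nat \<times> nat) set" where
  "ring_edges vs = {(vs ! k, vs ! ((k + 1) mod length vs)) | k. k < length vs}"

definition is_ring :: "(nat \<Rightarrow> nat set) \<Rightarrow> nat \<Rightarrow> nat list \<Rightarrow> bool" where
  "is_ring N n vs \<longleftrightarrow> distinct vs \<and> 2 \<le> length vs \<and> set vs \<subseteq> {..<n}
     \<and> (\<forall>(a, b) \<in> ring_edges vs. link N n a b)"

definition unidir_links :: "(nat \<Rightarrow> nat set) \<Rightarrow> nat \<Rightarrow> (nat \<times> nat) set" where
  "unidir_links N n = {(j, i). link N n j i \<and> \<not> link N n i j}"

definition admissible_links ::
  "(nat \<Rightarrow> nat set) \<Rightarrow> nat \<Rightarrow> (nat \<Rightarrow> nat \<Rightarrow> real^'m^'m) \<Rightarrow> bool" where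
  "admissible_links N n K \<longleftrightarrow>
     (\<forall>i j. link N n j i \<and> link N n i j \<longrightarrow> K j i = K i j) \<and>
     (\<exists>R. (\<forall>r\<in>R. is_ring N n r \<and> (\<exists>K0. \<forall>(a, b) \<in> ring_edges r. K a b = K0)) \<and>
          (\<forall>r\<in>R. \<forall>r'\<in>R. r \<noteq> r' \<longrightarrow> ring_edges r \<inter> ring_edges r' = {}) \<and>
          (\<Union>r\<in>R. ring_edges r) = unidir_links N n)"

end

theory Submission
  imports Defs
begin


definition qf :: "real^'m^'m \<Rightarrow> real^'m \<Rightarrow> real" where
  "qf A v = v \<bullet> (A *v v)"

lemma sym_dot:
  fixes A :: "real^'m^'m"
  assumes "transpose A = A"
  shows "v \<bullet> (A *v w) = w \<bullet> (A *v v)"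
proof -
  have "v \<bullet> (A *v w) = (v v* A) \<bullet> w" by (simp add: dot_lmul_matrix)
  also have "\<dots> = (transpose A *v v) \<bullet> w" by simp
  also have "\<dots> = w \<bullet> (A *v v)" using assms by (simp add: inner_commute)
  finally show ?thesis .
qed

lemma posdef_lower:
  fixes A :: "real^'m^'m"
  assumes "sym_posdef A"
  shows "\<exists>c>0. \<forall>v. c * (norm v)^2 \<le> qf A v"
proof -
  have cont: "continuous_on (sphere 0 1) (\<lambda>v::real^'m. qf A v)"
    unfolding qf_def by (intro continuous_intros linear_continuous_on bounded_linear.linear) auto
  have ne: "sphere (0::real^'m) 1 \<noteq> {}" by simp
  obtain u where u: "u \<in> sphere 0 1" and umin: "\<And>v. v \<in> sphere 0 1 \<Longrightarrow> qf A u \<le> qf A v"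
    using continuous_attains_inf[OF compact_sphere ne cont] by blast
  have "u \<noteq> 0" using u by auto
  then have cpos: "0 < qf A u" using assms unfolding sym_posdef_def qf_def by blast
  have "qf A u * (norm v)^2 \<le> qf A v" for v
  proof (cases "v = 0")
    case True then show ?thesis by (simp add: qf_def)
  next
    case False
    define s where "s = inverse (norm v) *\<^sub>R v"
    have "s \<in> sphere 0 1" using False by (simp add: s_def)
    then have "qf A u \<le> qf A s" by (rule umin)
    also have "qf A s = qf A v / (norm v)^2"
      by (simp add: s_def qf_def matrix_vector_mult_scaleR power2_eq_square field_simps)
    finally show ?thesis using False by (simp add: field_simps)
  qed
  then show ?thesis using cpos by blast
qed

lemma posdef_nonneg:
  fixes A :: "real^'m^'m"
  assumes "sym_posdef A"
  shows "0 \<le> qf A v"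
proof -
  obtain c where "c > 0" "\<And>v. c * (norm v)^2 \<le> qf A v" using posdef_lower[OF assms] by blast
  then show ?thesis by (metis mult_nonneg_nonneg order.trans less_imp_le zero_le_power2)
qed

lemma matrix_bound:
  fixes A :: "real^'m^'m"
  shows "\<exists>B>0. \<forall>v. norm (A *v v) \<le> B * norm v"
  using bounded_linear.pos_bounded[OF matrix_vector_mul_bounded_linear[of A]]
  by (metis mult.commute)

lemma ring_sum_zero:
  assumes "distinct vs"
  shows "(\<Sum>(a,b)\<in>ring_edges vs. f a - f b) = (0::real)"
proof -
  let ?L = "length vs"
  let ?h = "\<lambda>k. (vs ! k, vs ! ((k + 1) mod ?L))"
  have re: "ring_edges vs = ?h ` {..<?L}" unfolding ring_edges_def by auto
  have inj: "inj_on ?h {..<?L}"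
    using assms by (auto simp: inj_on_def nth_eq_iff_index_eq)
  have "(\<Sum>(a,b)\<in>ring_edges vs. f a - f b) = (\<Sum>k<?L. f (vs ! k) - f (vs ! ((k + 1) mod ?L)))"
    unfolding re by (subst sum.reindex[OF inj]) simp
  also have "\<dots> = (\<Sum>k<?L. f (vs ! k)) - (\<Sum>k<?L. f (vs ! ((k + 1) mod ?L)))"
    by (simp add: sum_subtractf)
  also have "(\<Sum>k<?L. f (vs ! ((k + 1) mod ?L))) = (\<Sum>k<?L. f (vs ! k))"
  proof (cases "?L = 0")
    case True then show ?thesis by simp
  next
    case False
    have bij: "bij_betw (\<lambda>k. (k + 1) mod ?L) {..<?L} {..<?L}"
    proof -
      have "inj_on (\<lambda>k. (k + 1) mod ?L) {..<?L}"
        unfolding inj_on_def using False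
        by (metis Suc_eq_plus1 lessThan_iff mod_Suc mod_less nat.inject nat_neq_iff not_less_eq zero_less_Suc)
      moreover have "(\<lambda>k. (k + 1) mod ?L) ` {..<?L} \<subseteq> {..<?L}" using False by auto
      ultimately show ?thesis
        by (simp add: bij_betw_def endo_inj_surj)
    qed
    show ?thesis using sum.reindex_bij_betw[OF bij, of "\<lambda>k. f (vs ! k)"] by simp
  qed
  finally show ?thesis by simp
qed

lemma cancel:
  fixes K :: "nat \<Rightarrow> nat \<Rightarrow> real^'m^'m"
  assumes adm: "admissible_links N n K"
    and fin: "finite {(j,i). link N n j i}"
  shows "(\<Sum>(j,i)\<in>{(j,i). link N n j i}. qf (K j i) (y j) - qf (K j i) (y i)) = 0"
proof -
  let ?F = "\<lambda>(j,i). qf (K j i) (y j) - qf (K j i) (y i)"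
  define E where "E = {(j,i). link N n j i}"
  define B where "B = {(j,i). link N n j i \<and> link N n i j}"
  define U where "U = unidir_links N n"
  have EBU: "E = B \<union> U" "B \<inter> U = {}" unfolding E_def B_def U_def unidir_links_def by auto
  have finE: "finite E" using fin by (simp add: E_def)
  have finB: "finite B" using finE EBU(1) by simp
  have finU: "finite U" using finE EBU(1) by simp
  have A: "(\<forall>i j. link N n j i \<and> link N n i j \<longrightarrow> K j i = K i j) \<and>
     (\<exists>R. (\<forall>r\<in>R. is_ring N n r \<and> (\<exists>K0. \<forall>(a, b) \<in> ring_edges r. K a b = K0)) \<and>
          (\<forall>r\<in>R. \<forall>r'\<in>R. r \<noteq> r' \<longrightarrow> ring_edges r \<inter> ring_edges r' = {}) \<and>
          (\<Union>r\<in>R. ring_edges r) = U)"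
    using adm unfolding U_def admissible_links_def by assumption
  have symK: "\<And>i j. link N n j i \<and> link N n i j \<Longrightarrow> K j i = K i j"
    using conjunct1[OF A] by blast
  obtain R where R1: "\<forall>r\<in>R. is_ring N n r \<and> (\<exists>K0. \<forall>(a, b) \<in> ring_edges r. K a b = K0)"
    and R2: "\<forall>r\<in>R. \<forall>r'\<in>R. r \<noteq> r' \<longrightarrow> ring_edges r \<inter> ring_edges r' = {}"
    and R3: "(\<Union>r\<in>R. ring_edges r) = U"
    using conjunct2[OF A] by (elim exE conjE)
  have sB: "sum ?F B = 0"
  proof -
    have swB: "prod.swap ` B = B" unfolding B_def by auto
    have "(\<Sum>(j,i)\<in>B. qf (K j i) (y i)) = (\<Sum>p\<in>prod.swap ` B. (\<lambda>(j,i). qf (K j i) (y i)) p)"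
      using swB by simp
    also have "\<dots> = (\<Sum>p\<in>B. (\<lambda>(j,i). qf (K j i) (y i)) (prod.swap p))"
      by (subst sum.reindex) (auto simp: inj_on_def o_def)
    also have "\<dots> = (\<Sum>(j,i)\<in>B. qf (K j i) (y j))"
      by (rule sum.cong[OF refl]) (auto simp: B_def symK)
    finally have "(\<Sum>(j,i)\<in>B. qf (K j i) (y i)) = (\<Sum>(j,i)\<in>B. qf (K j i) (y j))" .
    then show ?thesis by (simp add: sum_subtractf split_def)
  qed
  have finR: "finite R"
  proof -
    have ne: "\<And>r. r \<in> R \<Longrightarrow> ring_edges r \<noteq> {}"
      using R1 unfolding is_ring_def ring_edges_def by fastforce
    have "inj_on ring_edges R"
      unfolding inj_on_def by (metis R2 inf.idem ne)
    moreover have "ring_edges ` R \<subseteq> Pow U" using R3 by blast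
    ultimately show ?thesis using finU
      by (meson finite_Pow_iff finite_imageD finite_subset)
  qed
  have sU: "sum ?F U = 0"
  proof -
    have finr: "\<And>r. r \<in> R \<Longrightarrow> finite (ring_edges r)" using R3 finU
      by (metis UN_upper finite_subset)
    have "sum ?F U = (\<Sum>r\<in>R. sum ?F (ring_edges r))"
      unfolding R3[symmetric] apply (rule sum.UNION_disjoint[OF finR]) using finr R2 by blast+
    also have "\<dots> = 0"
    proof (rule sum.neutral, rule ballI)
      fix r assume r: "r \<in> R"
      then obtain K0 where K0: "\<forall>(a, b) \<in> ring_edges r. K a b = K0" using R1 by blast
      have d: "distinct r" using R1 r unfolding is_ring_def by blast
      have "sum ?F (ring_edges r) = (\<Sum>(a,b)\<in>ring_edges r. qf K0 (y a) - qf K0 (y b))"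
        proof (rule sum.cong[OF refl])
        fix p assume p: "p \<in> ring_edges r"
        obtain a b where ab: "p = (a,b)" by (cases p)
        have "K a b = K0" using K0 p ab by blast
        then show "?F p = (\<lambda>(a,b). qf K0 (y a) - qf K0 (y b)) p" using ab by simp
      qed
      also have "\<dots> = 0" by (rule ring_sum_zero[OF d])
      finally show "sum ?F (ring_edges r) = 0" .
    qed
    finally show ?thesis .
  qed
  have "sum ?F E = sum ?F B + sum ?F U" unfolding EBU(1) by (rule sum.union_disjoint[OF finB finU EBU(2)])
  then show ?thesis using sB sU by (simp add: E_def)
qed



lemma vd_bound:
  fixes f :: "real \<Rightarrow> 'a::real_normed_vector"
  assumes "a \<le> b" and d: "\<And>t. t \<in> {a..b} \<Longrightarrow> (f has_vector_derivative f' t) (at t)"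
    and B: "\<And>t. t \<in> {a..b} \<Longrightarrow> norm (f' t) \<le> B"
  shows "norm (f b - f a) \<le> B * (b - a)"
proof -
  have "norm (f b - f a) \<le> B * norm (b - a)"
  proof (rule differentiable_bound[where S="{a..b}" and f'="\<lambda>t h. h *\<^sub>R f' t"])
    show "convex {a..b}" by simp
    show "(f has_derivative (\<lambda>h. h *\<^sub>R f' t)) (at t within {a..b})" if "t \<in> {a..b}" for t
      using d[OF that] unfolding has_vector_derivative_def by (rule has_derivative_at_withinI)
    show "onorm (\<lambda>h. h *\<^sub>R f' t) \<le> B" if "t \<in> {a..b}" for t
      using B[OF that] by (simp add: onorm_scaleR_left[OF bounded_linear_ident] onorm_id)
  qed (use assms in auto)
  then show ?thesis using assms by simp
qed

lemma inner_sq_deriv: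
  fixes f :: "real \<Rightarrow> 'a::real_inner"
  assumes "(f has_vector_derivative v) (at t)"
  shows "((\<lambda>t. f t \<bullet> f t) has_real_derivative 2 * (f t \<bullet> v)) (at t)"
proof -
  have "((\<lambda>t. f t \<bullet> f t) has_derivative (\<lambda>h. f t \<bullet> (h *\<^sub>R v) + (h *\<^sub>R v) \<bullet> f t)) (at t)"
    using assms unfolding has_vector_derivative_def by (intro has_derivative_inner)
  moreover have "(\<lambda>h. f t \<bullet> (h *\<^sub>R v) + (h *\<^sub>R v) \<bullet> f t) = (\<lambda>h. (2 * (f t \<bullet> v)) * h)"
    by (auto simp: inner_commute algebra_simps)
  ultimately show ?thesis by (simp add: has_field_derivative_def)
qed

lemma edge_alg:
  fixes A :: "real^'m^'m"
  assumes "transpose A = A"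
  shows "a \<bullet> (A *v (b - a)) + (qf A c - qf A b)/2 = -(qf A (a - b))/2 + (qf A c - qf A a)/2"
proof -
  have "b \<bullet> (A *v a) = a \<bullet> (A *v b)" by (rule sym_dot[OF assms])
  then show ?thesis
    by (simp add: qf_def matrix_vector_mult_diff_distrib inner_diff_left inner_diff_right algebra_simps) (simp add: field_simps)
qed

lemma sum_edges:
  assumes "\<forall>i<n. N i \<subseteq> {0..<n} - {i}"
  shows "(\<Sum>i<n. \<Sum>j\<in>N i. F j i) = (\<Sum>(j,i)\<in>{(j,i). link N n j i}. F j i)"
proof -
  have fin: "\<forall>i\<in>{..<n}. finite (N i)" using assms by (meson finite_Diff finite_atLeastLessThan finite_subset lessThan_iff)
  have "(\<Sum>i<n. \<Sum>j\<in>N i. F j i) = (\<Sum>(i,j)\<in>Sigma {..<n} N. F j i)"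
    by (rule sum.Sigma) (use fin in auto)
  also have "\<dots> = (\<Sum>p\<in>prod.swap ` {(j,i). link N n j i}. (\<lambda>(i,j). F j i) p)"
    by (rule sum.cong) (auto simp: link_def image_iff)
  also have "\<dots> = (\<Sum>(j,i)\<in>{(j,i). link N n j i}. F j i)"
    by (subst sum.reindex) (auto simp: inj_on_def o_def case_prod_unfold)
  finally show ?thesis .
qed

lemma shift_vd:
  assumes "(g has_vector_derivative g') (at (t - c))"
  shows "((\<lambda>s. g (s - c)) has_vector_derivative g') (at t)"
proof -
  have "((\<lambda>s. s - c) has_vector_derivative 1) (at t)"
    unfolding has_real_derivative_iff_has_vector_derivative[symmetric]
    by (auto intro!: derivative_eq_intros)
  from vector_diff_chain_at[OF this, of g g'] assms show ?thesis by (simp add: o_def)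
qed



theorem theorem3:
  fixes n :: nat
    and N :: "nat \<Rightarrow> nat set"
    and K :: "nat \<Rightarrow> nat \<Rightarrow> real^'m^'m"
    and T :: "nat \<Rightarrow> nat \<Rightarrow> real"
    and \<tau> :: real
    and x :: "nat \<Rightarrow> real \<Rightarrow> real^'m"
  assumes n_pos: "1 \<le> n"
    and nbrs: "\<forall>i<n. N i \<subseteq> {0..<n} - {i}"
    and gains: "\<forall>i<n. \<forall>j\<in>N i. sym_posdef (K j i)"
    and delays: "\<forall>i<n. \<forall>j\<in>N i. 0 \<le> T j i \<and> T j i \<le> \<tau>"
    and conn: "network_connected N n"
    and links: "admissible_links N n K"
    and cont: "\<forall>i<n. continuous_on {-\<tau>..} (x i)"
    and dyn: "\<forall>i<n. \<forall>t>0.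
               (x i has_vector_derivative
                  (\<Sum>j\<in>N i. K j i *v (x j (t - T j i) - x i t))) (at t)"
  shows "\<forall>i<n. \<forall>j<n. ((\<lambda>t. x i t - x j t) \<longlongrightarrow> 0) at_top"
proof -
  define E where "E = {(j,i). link N n j i}"
  have Eprops: "snd e < n \<and> fst e < n \<and> fst e \<in> N (snd e)" if "e \<in> E" for e
  proof -
    from that have a: "snd e < n" "fst e \<in> N (snd e)" by (auto simp: E_def link_def)
    then have "N (snd e) \<subseteq> {0..<n} - {snd e}" using nbrs by blast
    with a show ?thesis by auto
  qed
  have finE: "finite E"
  proof -
    have "E \<subseteq> {..<n} \<times> {..<n}" using Eprops by auto
    then show ?thesis by (rule finite_subset) simp
  qed
  define d where "d = (\<lambda>i t. \<Sum>j\<in>N i. K j i *v (x j (t - T j i) - x i t))"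
  define Ke where "Ke = (\<lambda>e. K (fst e) (snd e))"
  define Te where "Te = (\<lambda>e. T (fst e) (snd e))"
  define g where "g = (\<lambda>e s. qf (Ke e) (x (fst e) s))"
  define G where "G = (\<lambda>e u. integral {-\<tau>..u} (g e))"
  define V where "V = (\<lambda>t. (\<Sum>i<n. x i t \<bullet> x i t)/2 + (\<Sum>e\<in>E. G e t - G e (t - Te e))/2)"
  define w where "w = (\<lambda>e t. x (snd e) t - x (fst e) (t - Te e))"
  define W where "W = (\<lambda>t. -(\<Sum>e\<in>E. qf (Ke e) (w e t))/2)"
  have Kpd: "sym_posdef (Ke e)" if "e \<in> E" for e
    using gains Eprops[OF that] unfolding Ke_def by blast
  have Tb: "0 \<le> Te e \<and> Te e \<le> \<tau>" if "e \<in> E" for e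
    using delays Eprops[OF that] unfolding Te_def by blast
  have qnn: "0 \<le> qf (Ke e) v" if "e \<in> E" for e v
    using posdef_nonneg[OF Kpd[OF that]] .
  have dyn': "(x i has_vector_derivative d i t) (at t)" if "i < n" "t > 0" for i t
    using dyn that unfolding d_def by blast
  have gcont: "continuous_on {-\<tau>..} (g e)" if "e \<in> E" for e
  proof -
    have c: "continuous_on {-\<tau>..} (x (fst e))" using cont Eprops[OF that] by blast
    have c2: "continuous_on {-\<tau>..} (\<lambda>s. Ke e *v x (fst e) s)"
      by (rule linear_continuous_on_compose[OF c]) (simp add: matrix_vector_mul_linear)
    show ?thesis unfolding g_def qf_def by (rule continuous_on_inner[OF c c2])
  qed
  have Gder: "(G e has_real_derivative g e t) (at t)" if "e \<in> E" "t > -\<tau>" for e t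
  proof -
    have c: "continuous_on {-\<tau>..t+1} (g e)"
      by (rule continuous_on_subset[OF gcont[OF that(1)]]) auto
    have "((\<lambda>u. integral {-\<tau>..u} (g e)) has_vector_derivative g e t) (at t within {-\<tau>..t+1})"
      by (rule integral_has_vector_derivative[OF c]) (use that in auto)
    moreover have "at t within {-\<tau>..t+1} = at t" by (rule at_within_Icc_at) (use that in auto)
    ultimately show ?thesis
      by (simp add: G_def has_real_derivative_iff_has_vector_derivative)
  qed
  have Vder: "(V has_real_derivative W t) (at t)" if tpos: "t > 0" for t
  proof -
    have D1: "((\<lambda>t. \<Sum>i<n. x i t \<bullet> x i t) has_real_derivative (\<Sum>i<n. 2 * (x i t \<bullet> d i t))) (at t)"
      by (rule DERIV_sum) (use inner_sq_deriv[OF dyn'] tpos in auto)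
    have D2: "((\<lambda>t. G e t - G e (t - Te e)) has_real_derivative g e t - g e (t - Te e)) (at t)"
      if e: "e \<in> E" for e
    proof -
      have "(G e has_real_derivative g e (t + - Te e)) (at (t + - Te e))"
        using Gder[OF e] Tb[OF e] tpos by auto
      then have "((\<lambda>s. G e (s + - Te e)) has_real_derivative g e (t + - Te e)) (at t)"
        by (simp only: DERIV_shift)
      then have "((\<lambda>s. G e (s - Te e)) has_real_derivative g e (t - Te e)) (at t)" by simp
      moreover have "(G e has_real_derivative g e t) (at t)"
        using Gder[OF e] Tb[OF e] tpos by auto
      ultimately show ?thesis by (intro DERIV_diff)
    qed
    have D3: "((\<lambda>t. \<Sum>e\<in>E. G e t - G e (t - Te e)) has_real_derivative (\<Sum>e\<in>E. g e t - g e (t - Te e))) (at t)"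
      by (rule DERIV_sum) (use D2 in auto)
    have D: "(V has_real_derivative (\<Sum>i<n. 2 * (x i t \<bullet> d i t))/2 + (\<Sum>e\<in>E. g e t - g e (t - Te e))/2) (at t)"
      unfolding V_def by (intro DERIV_add DERIV_cdivide D1 D3)
    define F where "F = (\<lambda>e. x (snd e) t \<bullet> (Ke e *v (x (fst e) (t - Te e) - x (snd e) t)))"
    have S1: "(\<Sum>i<n. x i t \<bullet> d i t) = (\<Sum>e\<in>E. F e)"
    proof -
      have "(\<Sum>i<n. x i t \<bullet> d i t) = (\<Sum>i<n. \<Sum>j\<in>N i. x i t \<bullet> (K j i *v (x j (t - T j i) - x i t)))"
        unfolding d_def by (simp add: inner_sum_right)
      also have "\<dots> = (\<Sum>(j,i)\<in>{(j,i). link N n j i}. x i t \<bullet> (K j i *v (x j (t - T j i) - x i t)))"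
        by (rule sum_edges[OF nbrs])
      also have "\<dots> = (\<Sum>e\<in>E. F e)"
        unfolding E_def F_def Ke_def Te_def by (simp add: case_prod_unfold)
      finally show ?thesis .
    qed
    have S2: "F e + (g e t - g e (t - Te e))/2 = -(qf (Ke e) (w e t))/2 + (qf (Ke e) (x (fst e) t) - qf (Ke e) (x (snd e) t))/2"
      if e: "e \<in> E" for e
    proof -
      have tr: "transpose (Ke e) = Ke e" using Kpd[OF e] by (simp add: sym_posdef_def)
      show ?thesis unfolding F_def g_def w_def by (rule edge_alg[OF tr])
    qed
    have S3: "(\<Sum>e\<in>E. qf (Ke e) (x (fst e) t) - qf (Ke e) (x (snd e) t)) = 0"
    proof -
      have "(\<Sum>(j,i)\<in>{(j,i). link N n j i}. qf (K j i) ((\<lambda>k. x k t) j) - qf (K j i) ((\<lambda>k. x k t) i)) = 0"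
        by (rule cancel[OF links]) (use finE in \<open>simp add: E_def\<close>)
      then show ?thesis unfolding E_def Ke_def by (simp add: case_prod_unfold)
    qed
    have "(\<Sum>i<n. 2 * (x i t \<bullet> d i t))/2 + (\<Sum>e\<in>E. g e t - g e (t - Te e))/2
        = (\<Sum>e\<in>E. F e + (g e t - g e (t - Te e))/2)"
      by (simp add: S1 sum.distrib sum_divide_distrib sum_distrib_left[symmetric])
    also have "\<dots> = (\<Sum>e\<in>E. -(qf (Ke e) (w e t))/2 + (qf (Ke e) (x (fst e) t) - qf (Ke e) (x (snd e) t))/2)"
      by (rule sum.cong[OF refl]) (rule S2)
    also have "\<dots> = W t + (\<Sum>e\<in>E. qf (Ke e) (x (fst e) t) - qf (Ke e) (x (snd e) t))/2"
      unfolding W_def by (simp only: sum.distrib sum_divide_distrib[symmetric] sum_negf)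
    also have "\<dots> = W t" using S3 by simp
    finally show ?thesis using D by simp
  qed
  have Wle: "W t \<le> -(qf (Ke e) (w e t))/2" if "e \<in> E" for e t
  proof -
    have "qf (Ke e) (w e t) \<le> (\<Sum>e\<in>E. qf (Ke e) (w e t))"
      by (rule member_le_sum) (use that qnn finE in auto)
    then show ?thesis unfolding W_def by linarith
  qed
  have Wnp: "W t \<le> 0" for t
  proof -
    have "0 \<le> (\<Sum>e\<in>E. qf (Ke e) (w e t))" by (rule sum_nonneg) (use qnn in auto)
    then show ?thesis unfolding W_def by linarith
  qed
  have Vanti: "V t \<le> V s" if "0 < s" "s \<le> t" for s t
  proof (rule DERIV_nonpos_imp_nonincreasing[OF that(2)])
    fix y assume "s \<le> y" "y \<le> t"
    then have "y > 0" using that by linarith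
    then show "\<exists>z. (V has_real_derivative z) (at y) \<and> z \<le> 0" using Vder Wnp by blast
  qed
  have Gmono: "G e (t - Te e) \<le> G e t" if e: "e \<in> E" and tpos: "t > 0" for e t
  proof (rule DERIV_nonneg_imp_nondecreasing[of "t - Te e" t "G e"])
    show "t - Te e \<le> t" using Tb[OF e] by simp
    fix y assume "t - Te e \<le> y" "y \<le> t"
    then have "y > -\<tau>" using Tb[OF e] tpos by linarith
    then show "\<exists>z. (G e has_real_derivative z) (at y) \<and> 0 \<le> z"
      using Gder[OF e] qnn[OF e] unfolding g_def by blast
  qed
  have Vlow: "x i t \<bullet> x i t / 2 \<le> V t" "0 \<le> V t" if "i < n" "t > 0" for i t
  proof -
    have a: "0 \<le> (\<Sum>e\<in>E. G e t - G e (t - Te e))"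
      by (rule sum_nonneg) (use Gmono that in force)
    have b: "x i t \<bullet> x i t \<le> (\<Sum>i<n. x i t \<bullet> x i t)"
      by (rule member_le_sum) (use that in auto)
    have c: "0 \<le> x i t \<bullet> x i t" by simp
    show "x i t \<bullet> x i t / 2 \<le> V t" "0 \<le> V t" unfolding V_def using a b c by linarith+
  qed
  have xbound: "\<exists>M. \<forall>i<n. \<forall>t\<ge>-\<tau>. norm (x i t) \<le> M"
  proof -
    have late: "norm (x i t) \<le> sqrt (2 * V 1)" if "i < n" "t \<ge> 1" for i t
    proof -
      have "x i t \<bullet> x i t / 2 \<le> V t" using Vlow(1)[of i t] that by simp
      also have "\<dots> \<le> V 1" using Vanti[of 1 t] that by simp
      finally have "x i t \<bullet> x i t \<le> 2 * V 1" by simp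
      then show ?thesis by (simp add: norm_eq_sqrt_inner)
    qed
    have "\<forall>i. \<exists>M. i < n \<longrightarrow> (\<forall>t\<in>{-\<tau>..1}. norm (x i t) \<le> M)"
    proof
      fix i
      show "\<exists>M. i < n \<longrightarrow> (\<forall>t\<in>{-\<tau>..1}. norm (x i t) \<le> M)"
      proof (cases "i < n")
        case True
        have "continuous_on {-\<tau>..1} (x i)"
          by (rule continuous_on_subset[of "{-\<tau>..}"]) (use cont True in auto)
        then have "bounded (x i ` {-\<tau>..1})"
          by (intro compact_imp_bounded compact_continuous_image) auto
        then show ?thesis unfolding bounded_iff by blast
      qed simp
    qed
    then obtain Mf where Mf: "\<And>i t. i < n \<Longrightarrow> t \<in> {-\<tau>..1} \<Longrightarrow> norm (x i t) \<le> Mf i"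
      by metis
    have "norm (x i t) \<le> sqrt (2 * V 1) + (\<Sum>i<n. \<bar>Mf i\<bar>)" if "i < n" "t \<ge> -\<tau>" for i t
    proof -
      have s: "\<bar>Mf i\<bar> \<le> (\<Sum>i<n. \<bar>Mf i\<bar>)" by (rule member_le_sum) (use that in auto)
      have "0 \<le> (\<Sum>i<n. \<bar>Mf i\<bar>)" by (rule sum_nonneg) auto
      moreover have "0 \<le> sqrt (2 * V 1)" using Vlow(2)[of 0 1] n_pos by simp
      moreover have "norm (x i t) \<le> sqrt (2 * V 1) \<or> norm (x i t) \<le> Mf i"
        using late[OF that(1)] Mf[OF that(1)] that(2) by (cases "t \<ge> 1") auto
      ultimately show ?thesis using s by linarith
    qed
    then show ?thesis by blast
  qed
  then obtain M where M: "\<And>i t. i < n \<Longrightarrow> t \<ge> -\<tau> \<Longrightarrow> norm (x i t) \<le> M" by blast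
  have dbound: "\<exists>D. \<forall>t>0. norm (d i t) \<le> D" if i: "i < n" for i
  proof -
    define B where "B = (\<lambda>j. SOME B. B > 0 \<and> (\<forall>v. norm (K j i *v v) \<le> B * norm v))"
    have Bp: "B j > 0 \<and> (\<forall>v. norm (K j i *v v) \<le> B j * norm v)" for j
      unfolding B_def by (rule someI_ex) (rule matrix_bound)
    have "norm (d i t) \<le> (\<Sum>j\<in>N i. B j * (2 * M))" if t: "t > 0" for t
      unfolding d_def
    proof (rule sum_norm_le)
      fix j assume j: "j \<in> N i"
      have "N i \<subseteq> {0..<n} - {i}" using nbrs i by blast
      then have jn: "j < n" using j by auto
      have T: "0 \<le> T j i" "T j i \<le> \<tau>" using delays i j by auto
      have "norm (x j (t - T j i) - x i t) \<le> norm (x j (t - T j i)) + norm (x i t)"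
        by (rule norm_triangle_ineq4)
      also have "\<dots> \<le> 2 * M" using M[OF jn, of "t - T j i"] M[OF i, of t] T t by simp
      finally have a: "norm (x j (t - T j i) - x i t) \<le> 2 * M" .
      have "norm (K j i *v (x j (t - T j i) - x i t)) \<le> B j * norm (x j (t - T j i) - x i t)"
        using Bp by blast
      also have "\<dots> \<le> B j * (2 * M)" using a Bp[of j] by (simp add: mult_left_mono)
      finally show "norm (K j i *v (x j (t - T j i) - x i t)) \<le> B j * (2 * M)" .
    qed
    then show ?thesis by blast
  qed
  have wlim: "(w e \<longlongrightarrow> 0) at_top" if e: "e \<in> E" for e
  proof -
    define i where "i = snd e"
    define j where "j = fst e"
    have i: "i < n" and j: "j < n" using Eprops[OF e] by (auto simp: i_def j_def)
    have T: "0 \<le> Te e" "Te e \<le> \<tau>" using Tb[OF e] by auto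
    obtain Di where Di: "\<And>t. t > 0 \<Longrightarrow> norm (d i t) \<le> Di" using dbound[OF i] by blast
    obtain Dj where Dj: "\<And>t. t > 0 \<Longrightarrow> norm (d j t) \<le> Dj" using dbound[OF j] by blast
    define Lw where "Lw = \<bar>Di\<bar> + \<bar>Dj\<bar> + 1"
    have Lwpos: "Lw > 0" unfolding Lw_def by simp
    define a0 where "a0 = \<tau> + 1"
    have wder: "(w e has_vector_derivative d i t - d j (t - Te e)) (at t)" if t: "t \<ge> a0" for t
    proof -
      have "(x i has_vector_derivative d i t) (at t)" using dyn'[OF i] t T unfolding a0_def by simp
      moreover have "((\<lambda>s. x j (s - Te e)) has_vector_derivative d j (t - Te e)) (at t)"
        by (rule shift_vd) (use dyn'[OF j] t T in \<open>simp add: a0_def\<close>)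
      ultimately have "((\<lambda>s. x i s - x j (s - Te e)) has_vector_derivative d i t - d j (t - Te e)) (at t)"
        by (rule has_vector_derivative_diff)
      then show ?thesis unfolding w_def i_def j_def .
    qed
    have wlip: "norm (w e u - w e s) \<le> Lw * (u - s)" if "a0 \<le> s" "s \<le> u" for s u
    proof (rule vd_bound[OF that(2)])
      fix t assume t: "t \<in> {s..u}"
      then show "(w e has_vector_derivative d i t - d j (t - Te e)) (at t)" using wder that by auto
      have "norm (d i t - d j (t - Te e)) \<le> norm (d i t) + norm (d j (t - Te e))"
        by (rule norm_triangle_ineq4)
      also have "\<dots> \<le> Lw" using Di[of t] Dj[of "t - Te e"] t that T unfolding Lw_def a0_def by auto
      finally show "norm (d i t - d j (t - Te e)) \<le> Lw" .
    qed
    obtain c where c: "c > 0" "\<And>v. c * (norm v)^2 \<le> qf (Ke e) v"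
      using posdef_lower[OF Kpd[OF e]] by blast
    show ?thesis
      unfolding tendsto_iff eventually_at_top_linorder dist_norm
    proof (intro allI impI)
      fix \<epsilon> :: real assume ep: "\<epsilon> > 0"
      define \<delta> where "\<delta> = \<epsilon> / (2 * Lw)"
      define \<kappa> where "\<kappa> = c * \<epsilon>^2 / 8"
      define \<eta> where "\<eta> = \<kappa> * \<delta>"
      have dpos: "\<delta> > 0" unfolding \<delta>_def using ep Lwpos by simp
      have kpos: "\<kappa> > 0" unfolding \<kappa>_def using ep c by simp
      have etapos: "\<eta> > 0" unfolding \<eta>_def using dpos kpos by simp
      define L where "L = Inf (V ` {1..})"
      have bdd: "bdd_below (V ` {1..})"
        by (rule bdd_belowI[of _ 0]) (use Vlow(2)[of 0] n_pos in auto)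
      have Llow: "L \<le> V t" if "t \<ge> 1" for t
        unfolding L_def by (rule cInf_lower) (use that bdd in auto)
      have "L < L + \<eta>" using etapos by simp
      then obtain s where s: "s \<ge> 1" "V s < L + \<eta>"
        unfolding L_def by (subst (asm) cInf_less_iff) (use bdd in auto)
      show "\<exists>N. \<forall>t\<ge>N. norm (w e t - 0) < \<epsilon>"
      proof (intro exI allI impI)
        fix t assume tN: "t \<ge> max s a0"
        show "norm (w e t - 0) < \<epsilon>"
        proof (rule ccontr)
          assume "\<not> norm (w e t - 0) < \<epsilon>"
          then have big: "norm (w e t) \<ge> \<epsilon>" by simp
          have Wu: "W u \<le> - \<kappa>" if u: "t \<le> u" "u \<le> t + \<delta>" for u
          proof -
            have "norm (w e u - w e t) \<le> Lw * (u - t)" using wlip[of t u] tN u by auto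
            also have "\<dots> \<le> Lw * \<delta>" using u Lwpos by simp
            also have "\<dots> = \<epsilon> / 2" unfolding \<delta>_def using Lwpos by simp
            finally have "norm (w e u - w e t) \<le> \<epsilon> / 2" .
            then have "norm (w e u) \<ge> \<epsilon> / 2" using big norm_triangle_ineq2[of "w e t" "w e u"]
              by (simp add: norm_minus_commute)
            then have "(\<epsilon> / 2)^2 \<le> (norm (w e u))^2" using ep by (intro power_mono) auto
            then have "c * (\<epsilon> / 2)^2 \<le> c * (norm (w e u))^2" using c by simp
            also have "\<dots> \<le> qf (Ke e) (w e u)" by (rule c(2))
            finally have "c * (\<epsilon> / 2)^2 \<le> qf (Ke e) (w e u)" .
            then have "W u \<le> - (c * (\<epsilon> / 2)^2) / 2" using Wle[OF e, of u] by linarith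
            also have "- (c * (\<epsilon> / 2)^2) / 2 = - \<kappa>" unfolding \<kappa>_def by (simp add: power2_eq_square)
            finally show ?thesis .
          qed
          have "V (t + \<delta>) + \<kappa> * (t + \<delta>) \<le> V t + \<kappa> * t"
          proof (rule DERIV_nonpos_imp_nonincreasing[of t "t + \<delta>" "\<lambda>u. V u + \<kappa> * u"])
            show "t \<le> t + \<delta>" using dpos by simp
            fix u assume u: "t \<le> u" "u \<le> t + \<delta>"
            have upos: "u > 0" using u tN s by linarith
            have "((\<lambda>u. V u + \<kappa> * u) has_real_derivative W u + \<kappa> * 1) (at u)"
              by (intro DERIV_add Vder[OF upos] DERIV_cmult DERIV_ident)
            moreover have "W u + \<kappa> * 1 \<le> 0" using Wu[OF u] by simp
            ultimately show "\<exists>y. ((\<lambda>u. V u + \<kappa> * u) has_real_derivative y) (at u) \<and> y \<le> 0" by blast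
          qed
          then have "V (t + \<delta>) \<le> V t - \<eta>" unfolding \<eta>_def by (simp add: algebra_simps)
          also have "V t \<le> V s" using Vanti[of s t] s tN by auto
          finally have "V (t + \<delta>) < L" using s by linarith
          moreover have "L \<le> V (t + \<delta>)" using Llow[of "t + \<delta>"] s tN dpos by auto
          ultimately show False by simp
        qed
      qed
    qed
  qed
  have dlim: "(d i \<longlongrightarrow> 0) at_top" if i: "i < n" for i
    unfolding d_def
  proof (rule tendsto_null_sum)
    fix j assume j: "j \<in> N i"
    have e: "(j, i) \<in> E" using i j by (simp add: E_def link_def)
    have h: "((\<lambda>t. x j (t - T j i) - x i t) \<longlongrightarrow> 0) at_top"
      using tendsto_minus[OF wlim[OF e]] by (simp add: w_def Te_def)
    have "((\<lambda>t. K j i *v (x j (t - T j i) - x i t)) \<longlongrightarrow> K j i *v 0) at_top"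
      by (rule bounded_linear.tendsto[OF matrix_vector_mul_bounded_linear h])
    then show "((\<lambda>t. K j i *v (x j (t - T j i) - x i t)) \<longlongrightarrow> 0) at_top" by simp
  qed
  have shiftlim: "((\<lambda>t. x (fst e) t - x (fst e) (t - Te e)) \<longlongrightarrow> 0) at_top" if e: "e \<in> E" for e
  proof -
    define j where "j = fst e"
    have j: "j < n" using Eprops[OF e] by (auto simp: j_def)
    have T: "0 \<le> Te e" "Te e \<le> \<tau>" using Tb[OF e] by auto
    show ?thesis
      unfolding tendsto_iff eventually_at_top_linorder dist_norm j_def[symmetric]
    proof (intro allI impI)
      fix \<epsilon> :: real assume ep: "\<epsilon> > 0"
      have "\<epsilon> / (\<tau> + 1) > 0" using ep T by simp
      then obtain T2 where T2: "\<And>t. t \<ge> T2 \<Longrightarrow> norm (d j t - 0) < \<epsilon> / (\<tau> + 1)"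
        using dlim[OF j] unfolding tendsto_iff eventually_at_top_linorder dist_norm by blast
      show "\<exists>N. \<forall>t\<ge>N. norm (x j t - x j (t - Te e) - 0) < \<epsilon>"
      proof (intro exI allI impI)
        fix t assume t: "t \<ge> max T2 0 + \<tau> + 1"
        have "norm (x j t - x j (t - Te e)) \<le> \<epsilon> / (\<tau> + 1) * (t - (t - Te e))"
        proof (rule vd_bound)
          show "t - Te e \<le> t" using T by simp
          fix u assume u: "u \<in> {t - Te e..t}"
          then have "u > 0" "u \<ge> T2" using t T by auto
          then show "(x j has_vector_derivative d j u) (at u)" "norm (d j u) \<le> \<epsilon> / (\<tau> + 1)"
            using dyn'[OF j] T2[of u] by auto
        qed
        also have "\<dots> = \<epsilon> * Te e / (\<tau> + 1)" by simp
        also have "\<dots> < \<epsilon>"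
        proof -
          have "\<epsilon> * Te e \<le> \<epsilon> * \<tau>" using T ep by (simp add: mult_left_mono)
          then have "\<epsilon> * Te e < \<epsilon> + \<epsilon> * \<tau>" using ep by linarith
          then show ?thesis using T ep by (simp add: field_simps)
        qed
        finally show "norm (x j t - x j (t - Te e) - 0) < \<epsilon>" by simp
      qed
    qed
  qed
  have edgelim: "((\<lambda>t. x i t - x j t) \<longlongrightarrow> 0) at_top" if "link N n j i" for i j
  proof -
    have e: "(j,i) \<in> E" using that by (simp add: E_def)
    have h: "((\<lambda>t. x j (t - Te (j,i)) - x j t) \<longlongrightarrow> 0) at_top"
      using tendsto_minus[OF shiftlim[OF e]] by simp
    have "((\<lambda>t. w (j,i) t + (x j (t - Te (j,i)) - x j t)) \<longlongrightarrow> 0 + 0) at_top"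
      by (rule tendsto_add[OF wlim[OF e] h])
    then show ?thesis by (simp add: w_def)
  qed
  show ?thesis
  proof (intro allI impI)
    fix i j assume ij: "i < n" "j < n"
    then have r: "(\<lambda>a b. link N n a b \<or> link N n b a)\<^sup>*\<^sup>* i j"
      using conn by (simp add: network_connected_def)
    show "((\<lambda>t. x i t - x j t) \<longlongrightarrow> 0) at_top"
      using r
    proof (induction rule: rtranclp_induct)
      case base then show ?case by simp
    next
      case (step y z)
      have yz: "((\<lambda>t. x y t - x z t) \<longlongrightarrow> 0) at_top"
        using step(2)
      proof
        assume "link N n y z"
        from tendsto_minus[OF edgelim[OF this]] show ?thesis by simp
      next
        assume "link N n z y"
        from edgelim[OF this] show ?thesis .
      qed
      have "((\<lambda>t. (x i t - x y t) + (x y t - x z t)) \<longlongrightarrow> 0 + 0) at_top"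
        by (rule tendsto_add[OF step(3) yz])
      then show ?case by simp
    qed
  qed
qed

end
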